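(* Let $X$ be a compact metric space, $T:X\to X$ a surjective local homeomorphism, $d\in\mathbb{N}$, $E\subseteq\mathbb{Z}$ finite and $\varepsilon>0$, and let $\varphi:X\to P_d(\mathbb{Z})$ be a continuous $(E,\varepsilon)$-equivariant map. Then there exist a finite set $S\subseteq\mathbb{Z}$ and a continuous $(E,\varepsilon)$-equivariant map $\varphi':X\to P_d(\mathbb{Z})$ with $\varphi'(X)\subseteq P(S)\cap P_d(\mathbb{Z})$.
   Context: $P_d(\mathbb{Z})$: probability measures on $\mathbb{Z}$ supported on at most $d+1$ points, metric $\rho(\mu,\nu)=\sum_m|\mu(m)-\nu(m)|$, action $\alpha_n(\mu)(m)=\mu(m-n)$. $P(S)$: probability measures supported in $S$. For $n\in\mathbb{Z}$, $T^n(\{x\})$ is the image under $T^n$ if $n\ge0$ and the preimage under $T^{|n|}$ if $n<0$. $\varphi$ is $(E,\varepsilon)$-equivariant if $\rho(\varphi(y),\alpha_n(\varphi(x)))<\varepsilon$ for all $n\in E$, $x\in X$, $y\in T^n(\{x\})$. *)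

theory Defs
  imports "HOL-Analysis.Analysis"
begin

definition prob_int :: "(int \<Rightarrow> real) \<Rightarrow> bool" where
  "prob_int \<mu> \<longleftrightarrow> (\<forall>m. \<mu> m \<ge> 0) \<and> finite {m. \<mu> m \<noteq> 0} \<and> (\<Sum>m\<in>{m. \<mu> m \<noteq> 0}. \<mu> m) = 1"

definition Pd :: "nat \<Rightarrow> (int \<Rightarrow> real) set" where
  "Pd d = {\<mu>. prob_int \<mu> \<and> card {m. \<mu> m \<noteq> 0} \<le> d + 1}"

definition PS :: "int set \<Rightarrow> (int \<Rightarrow> real) set" where
  "PS S = {\<mu>. prob_int \<mu> \<and> {m. \<mu> m \<noteq> 0} \<subseteq> S}"

definition rho :: "(int \<Rightarrow> real) \<Rightarrow> (int \<Rightarrow> real) \<Rightarrow> real" where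
  "rho \<mu> \<nu> = (\<Sum>m\<in>{m. \<mu> m \<noteq> 0} \<union> {m. \<nu> m \<noteq> 0}. \<bar>\<mu> m - \<nu> m\<bar>)"

definition alpha :: "int \<Rightarrow> (int \<Rightarrow> real) \<Rightarrow> (int \<Rightarrow> real)" where
  "alpha n \<mu> = (\<lambda>m. \<mu> (m - n))"

text \<open>T^n({x}): image under T^n for n >= 0, preimage under T^|n| for n < 0.\<close>
definition orbit_set :: "('a \<Rightarrow> 'a) \<Rightarrow> int \<Rightarrow> 'a \<Rightarrow> 'a set" where
  "orbit_set T n x = (if n \<ge> 0 then {(T ^^ nat n) x} else {y. (T ^^ nat (- n)) y = x})"

definition equivariant_approx ::
  "('a \<Rightarrow> 'a) \<Rightarrow> int set \<Rightarrow> real \<Rightarrow> ('a \<Rightarrow> int \<Rightarrow> real) \<Rightarrow> bool" where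
  "equivariant_approx T E \<epsilon> \<phi> \<longleftrightarrow>
     (\<forall>n\<in>E. \<forall>x. \<forall>y\<in>orbit_set T n x. rho (\<phi> y) (alpha n (\<phi> x)) < \<epsilon>)"

definition rho_continuous :: "('a::metric_space \<Rightarrow> int \<Rightarrow> real) \<Rightarrow> bool" where
  "rho_continuous \<phi> \<longleftrightarrow>
     (\<forall>x. \<forall>e>0. \<exists>\<delta>>0. \<forall>y. dist y x < \<delta> \<longrightarrow> rho (\<phi> y) (\<phi> x) < e)"

definition local_homeo :: "('a::topological_space \<Rightarrow> 'a) \<Rightarrow> bool" where
  "local_homeo T \<longleftrightarrow>
     (\<forall>x. \<exists>U. open U \<and> x \<in> U \<and> open (T ` U) \<and> homeomorphism U (T ` U) T (inv_into U T))"

end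

theory Submission
  imports Defs
begin

lemma rho_sum:
  assumes "finite A" "{m. \<mu> m \<noteq> 0} \<subseteq> A" "{m. \<nu> m \<noteq> 0} \<subseteq> A"
  shows "rho \<mu> \<nu> = (\<Sum>m\<in>A. \<bar>\<mu> m - \<nu> m\<bar>)"
  unfolding rho_def by (rule sum.mono_neutral_left) (use assms in \<open>auto intro: finite_subset\<close>)

lemma rho_nonneg: "rho \<mu> \<nu> \<ge> 0"
  unfolding rho_def by (simp add: sum_nonneg)

lemma rho_sym: "rho \<mu> \<nu> = rho \<nu> \<mu>"
  unfolding rho_def by (simp add: Un_commute abs_minus_commute)

lemma rho_tri:
  assumes "finite {m. \<mu> m \<noteq> 0}" "finite {m. \<nu> m \<noteq> 0}" "finite {m. \<kappa> m \<noteq> 0}"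
  shows "rho \<mu> \<kappa> \<le> rho \<mu> \<nu> + rho \<nu> \<kappa>"
proof -
  let ?A = "{m. \<mu> m \<noteq> 0} \<union> {m. \<nu> m \<noteq> 0} \<union> {m. \<kappa> m \<noteq> 0}"
  have f: "finite ?A" using assms by auto
  have "rho \<mu> \<kappa> = (\<Sum>m\<in>?A. \<bar>\<mu> m - \<kappa> m\<bar>)" by (rule rho_sum[OF f]) auto
  also have "\<dots> \<le> (\<Sum>m\<in>?A. \<bar>\<mu> m - \<nu> m\<bar> + \<bar>\<nu> m - \<kappa> m\<bar>)"
    by (rule sum_mono) arith
  also have "\<dots> = (\<Sum>m\<in>?A. \<bar>\<mu> m - \<nu> m\<bar>) + (\<Sum>m\<in>?A. \<bar>\<nu> m - \<kappa> m\<bar>)"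
    by (simp add: sum.distrib)
  also have "\<dots> = rho \<mu> \<nu> + rho \<nu> \<kappa>"
    by (subst (1 2) rho_sum[OF f]) auto
  finally show ?thesis .
qed

lemma supp_alpha: "{m. alpha n \<mu> m \<noteq> 0} = (\<lambda>m. m + n) ` {m. \<mu> m \<noteq> 0}"
  unfolding alpha_def by (auto simp: image_iff) (metis diff_add_cancel)

lemma fs_alpha: "finite {m. \<mu> m \<noteq> 0} \<Longrightarrow> finite {m. alpha n \<mu> m \<noteq> 0}"
  by (simp add: supp_alpha)

lemma rho_alpha:
  assumes "finite {m. \<mu> m \<noteq> 0}" "finite {m. \<nu> m \<noteq> 0}"
  shows "rho (alpha n \<mu>) (alpha n \<nu>) = rho \<mu> \<nu>"
proof -
  let ?A = "{m. \<mu> m \<noteq> 0} \<union> {m. \<nu> m \<noteq> 0}"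
  have "rho (alpha n \<mu>) (alpha n \<nu>) = (\<Sum>m\<in>(\<lambda>m. m + n) ` ?A. \<bar>alpha n \<mu> m - alpha n \<nu> m\<bar>)"
    by (rule rho_sum) (use assms in \<open>auto simp: supp_alpha\<close>)
  also have "\<dots> = (\<Sum>m\<in>?A. \<bar>\<mu> m - \<nu> m\<bar>)"
    by (subst sum.reindex) (auto simp: inj_on_def alpha_def)
  also have "\<dots> = rho \<mu> \<nu>" unfolding rho_def ..
  finally show ?thesis .
qed

lemma ptwise:
  fixes a b p q :: real
  assumes "p > 0" "q > 0" "b \<ge> 0"
  shows "\<bar>a / p - b / q\<bar> \<le> \<bar>a - b\<bar> * (1 / p) + b * (\<bar>q - p\<bar> / (p * q))"
proof -
  have "a / p - b / q = (a - b) / p + b * (q - p) / (p * q)"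
    using assms by (simp add: field_simps)
  also have "\<bar>\<dots>\<bar> \<le> \<bar>(a - b) / p\<bar> + \<bar>b * (q - p) / (p * q)\<bar>" by (rule abs_triangle_ineq)
  also have "\<dots> = \<bar>a - b\<bar> * (1 / p) + b * (\<bar>q - p\<bar> / (p * q))"
    using assms by (simp add: abs_mult)
  finally show ?thesis .
qed


lemma h_est:
  assumes "finite {m. a m \<noteq> 0}" "finite {m. a' m \<noteq> 0}" "finite {m. b m \<noteq> 0}" "finite {m. b' m \<noteq> 0}"
  shows "rho b' (alpha n a') \<le> rho b' b + rho b (alpha n a) + rho a' a"
proof -
  have "rho b' (alpha n a') \<le> rho b' b + rho b (alpha n a')"
    by (rule rho_tri) (use assms fs_alpha in auto)
  moreover have "rho b (alpha n a') \<le> rho b (alpha n a) + rho (alpha n a) (alpha n a')"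
    by (rule rho_tri) (use assms fs_alpha in auto)
  moreover have "rho (alpha n a) (alpha n a') = rho a' a"
    using rho_alpha[OF assms(1,2)] rho_sym by metis
  ultimately show ?thesis by linarith
qed

theorem lemma5p8:
  fixes T :: "'a::metric_space \<Rightarrow> 'a"
    and d :: nat and E :: "int set" and \<epsilon> :: real
    and \<phi> :: "'a \<Rightarrow> int \<Rightarrow> real"
  assumes "compact (UNIV :: 'a set)"
    and "surj T" and "local_homeo T"
    and "finite E" and "\<epsilon> > 0"
    and "\<forall>x. \<phi> x \<in> Pd d"
    and "rho_continuous \<phi>"
    and "equivariant_approx T E \<epsilon> \<phi>"
  shows "\<exists>S :: int set. \<exists>\<phi>' :: 'a \<Rightarrow> int \<Rightarrow> real.
           finite S \<and> (\<forall>x. \<phi>' x \<in> Pd d) \<and> rho_continuous \<phi>' \<and>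
           equivariant_approx T E \<epsilon> \<phi>' \<and> (\<forall>x. \<phi>' x \<in> PS S \<inter> Pd d)"
proof -
  have nn: "\<And>x k. \<phi> x k \<ge> 0" and fs: "\<And>x. finite {m. \<phi> x m \<noteq> 0}"
    and s1: "\<And>x. (\<Sum>m\<in>{m. \<phi> x m \<noteq> 0}. \<phi> x m) = 1"
    and cd: "\<And>x. card {m. \<phi> x m \<noteq> 0} \<le> d + 1"
    using assms(6) by (auto simp: Pd_def prob_int_def)
  have contT: "continuous_on UNIV T"
  proof -
    have "isCont T x" for x
    proof -
      obtain U where "open U" "x \<in> U" "homeomorphism U (T ` U) T (inv_into U T)"
        using assms(3) unfolding local_homeo_def by blast
      then show ?thesis using continuous_on_eq_continuous_at unfolding homeomorphism_def by blast
    qed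
    thus ?thesis by (simp add: continuous_at_imp_continuous_on)
  qed
  have contTk: "continuous_on UNIV (T ^^ k)" for k
  proof (induction k)
    case 0 then show ?case by (simp add: continuous_on_id)
  next
    case (Suc k)
    then show ?case using continuous_on_compose[OF Suc continuous_on_subset[OF contT]] by simp
  qed
  have slack: "\<exists>c<\<epsilon>. \<forall>x. \<forall>y\<in>orbit_set T n x. rho (\<phi> y) (alpha n (\<phi> x)) \<le> c" if nE: "n \<in> E" for n
  proof -
    define G where "G = {p::'a\<times>'a. snd p \<in> orbit_set T n (fst p)}"
    define h where "h p = rho (\<phi> (snd p)) (alpha n (\<phi> (fst p)))" for p
    have cf: "continuous_on UNIV (\<lambda>p::'a\<times>'a. (T ^^ k) (fst p))" for k
      by (rule continuous_on_compose2[OF contTk[of k] continuous_on_fst[OF continuous_on_id]]) auto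
    have cs: "continuous_on UNIV (\<lambda>p::'a\<times>'a. (T ^^ k) (snd p))" for k
      by (rule continuous_on_compose2[OF contTk[of k] continuous_on_snd[OF continuous_on_id]]) auto
    have "closed G"
    proof (cases "n \<ge> 0")
      case True
      then have "G = {p. snd p = (T ^^ nat n) (fst p)}" by (auto simp: G_def orbit_set_def)
      then show ?thesis using closed_Collect_eq[OF continuous_on_snd[OF continuous_on_id] cf] by simp
    next
      case False
      then have "G = {p. (T ^^ nat (-n)) (snd p) = fst p}" by (auto simp: G_def orbit_set_def)
      then show ?thesis using closed_Collect_eq[OF cs continuous_on_fst[OF continuous_on_id]] by simp
    qed
    then have cG: "compact G"
      using compact_Int_closed[OF compact_Times[OF assms(1) assms(1)]] by simp
    have hc: "continuous_on G h"
      unfolding continuous_on_iff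
    proof (intro ballI allI impI)
      fix p and e :: real assume "p \<in> G" "e > 0"
      obtain d1 where d1: "d1 > 0" "\<forall>y. dist y (snd p) < d1 \<longrightarrow> rho (\<phi> y) (\<phi> (snd p)) < e/2"
        using assms(7) \<open>e > 0\<close> unfolding rho_continuous_def by (meson half_gt_zero)
      obtain d2 where d2: "d2 > 0" "\<forall>y. dist y (fst p) < d2 \<longrightarrow> rho (\<phi> y) (\<phi> (fst p)) < e/2"
        using assms(7) \<open>e > 0\<close> unfolding rho_continuous_def by (meson half_gt_zero)
      show "\<exists>\<delta>>0. \<forall>p'\<in>G. dist p' p < \<delta> \<longrightarrow> dist (h p') (h p) < e"
      proof (intro exI conjI ballI impI)
        show "min d1 d2 > 0" using d1 d2 by simp
        fix p' assume "dist p' p < min d1 d2"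
        then have a1: "rho (\<phi> (snd p')) (\<phi> (snd p)) < e/2" and a2: "rho (\<phi> (fst p')) (\<phi> (fst p)) < e/2"
          using d1 d2 dist_fst_le[of p' p] dist_snd_le[of p' p] by auto
        have "h p' \<le> rho (\<phi> (snd p')) (\<phi> (snd p)) + h p + rho (\<phi> (fst p')) (\<phi> (fst p))"
          unfolding h_def by (rule h_est) (use fs in auto)
        moreover have "h p \<le> rho (\<phi> (snd p)) (\<phi> (snd p')) + h p' + rho (\<phi> (fst p)) (\<phi> (fst p'))"
          unfolding h_def by (rule h_est) (use fs in auto)
        ultimately show "dist (h p') (h p) < e"
          using a1 a2 rho_sym[of "\<phi> (snd p)"] rho_sym[of "\<phi> (fst p)"] by (simp add: dist_real_def abs_less_iff)
      qed
    qed
    show ?thesis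
    proof (cases "G = {}")
      case True
      then show ?thesis using assms(5) by (auto simp: G_def intro!: exI[of _ 0])
    next
      case False
      have "compact (h ` G)" by (rule compact_continuous_image[OF hc cG])
      then obtain s where "s \<in> h ` G" "\<forall>t\<in>h ` G. t \<le> s"
        using compact_attains_sup False by blast
      then obtain p0 where p0: "p0 \<in> G" "s = h p0" "\<forall>p\<in>G. h p \<le> s" by auto
      have "s < \<epsilon>" using assms(8) nE p0 unfolding equivariant_approx_def G_def h_def by auto
      then show ?thesis using p0 by (intro exI[of _ s]) (auto simp: G_def h_def)
    qed
  qed
  obtain cf where cf: "\<forall>n\<in>E. cf n < \<epsilon> \<and> (\<forall>x. \<forall>y\<in>orbit_set T n x. rho (\<phi> y) (alpha n (\<phi> x)) \<le> cf n)"
    using slack by metis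
  define c where "c = Max (insert 0 (cf ` E))"
  have cle: "c < \<epsilon>" using cf assms(4,5) by (simp add: c_def Max_less_iff)
  have cb: "\<forall>n\<in>E. \<forall>x. \<forall>y\<in>orbit_set T n x. rho (\<phi> y) (alpha n (\<phi> x)) \<le> c"
  proof (intro ballI allI)
    fix n x y assume "n \<in> E" "y \<in> orbit_set T n x"
    moreover have "cf n \<le> c" unfolding c_def using \<open>n \<in> E\<close> assms(4) by (intro Max_ge) auto
    ultimately show "rho (\<phi> y) (alpha n (\<phi> x)) \<le> c" using cf by force
  qed
  define \<eta> where "\<eta> = (\<epsilon> - c) / 3"
  have \<eta>: "\<eta> > 0" using cle by (simp add: \<eta>_def)
  define \<delta> where "\<delta> = min (\<eta>/2) (1/2)"
  have \<delta>: "\<delta> > 0" using \<eta> by (simp add: \<delta>_def)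
  have "\<forall>x. \<exists>r>0. \<forall>y. dist y x < r \<longrightarrow> rho (\<phi> y) (\<phi> x) < \<delta>"
    using assms(7) \<delta> unfolding rho_continuous_def by blast
  then obtain r where r: "\<And>x. r x > 0" "\<And>x y. dist y x < r x \<Longrightarrow> rho (\<phi> y) (\<phi> x) < \<delta>"
    by metis
  obtain t where t: "finite t" "UNIV \<subseteq> (\<Union>x\<in>t. ball x (r x))"
  proof -
    have "UNIV \<subseteq> (\<Union>x\<in>UNIV. ball x (r x))" using r(1) by auto
    then show ?thesis using compactE_image[OF assms(1), of UNIV "\<lambda>x. ball x (r x)"] that by auto
  qed
  define S where "S = (\<Union>x\<in>t. {m. \<phi> x m \<noteq> 0})"
  have finS: "finite S" using t fs by (auto simp: S_def)
  have tail: "(\<Sum>k\<in>{m. \<phi> y m \<noteq> 0} - S. \<phi> y k) < \<delta>" for y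
  proof -
    have "y \<in> (\<Union>x\<in>t. ball x (r x))" using t(2) by blast
    then obtain x where x: "x \<in> t" "dist x y < r x" by auto
    hence rr: "rho (\<phi> y) (\<phi> x) < \<delta>" using r by (simp add: dist_commute)
    have "(\<Sum>k\<in>{m. \<phi> y m \<noteq> 0} - S. \<phi> y k) \<le> (\<Sum>k\<in>{m. \<phi> y m \<noteq> 0} - {m. \<phi> x m \<noteq> 0}. \<phi> y k)"
      by (rule sum_mono2) (use fs nn x in \<open>auto simp: S_def\<close>)
    also have "\<dots> = (\<Sum>k\<in>{m. \<phi> y m \<noteq> 0} - {m. \<phi> x m \<noteq> 0}. \<bar>\<phi> y k - \<phi> x k\<bar>)"
      by (rule sum.cong) (auto simp: nn)
    also have "\<dots> \<le> rho (\<phi> y) (\<phi> x)" unfolding rho_def by (rule sum_mono2) (use fs in auto)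
    finally show ?thesis using rr by linarith
  qed
  define M where "M x = (\<Sum>k\<in>S. \<phi> x k)" for x
  have Mint: "M x = (\<Sum>k\<in>{m. \<phi> x m \<noteq> 0} \<inter> S. \<phi> x k)" for x
    unfolding M_def by (rule sum.mono_neutral_right) (use finS in auto)
  have Meq: "M x = 1 - (\<Sum>k\<in>{m. \<phi> x m \<noteq> 0} - S. \<phi> x k)" for x
    using sum.Int_Diff[OF fs, where g="\<phi> x" and B=S] s1[of x] Mint[of x] by simp
  have Mlo: "M x > 1/2" and Mhi: "M x \<le> 1" and Md: "1 - M x < \<delta>" for x
    using Meq[of x] tail[of x] sum_nonneg[of "{m. \<phi> x m \<noteq> 0} - S" "\<phi> x"] nn \<delta>_def by auto
  define \<psi> where "\<psi> x = (\<lambda>k. if k \<in> S then \<phi> x k / M x else 0)" for x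
  have spt\<psi>: "{m. \<psi> x m \<noteq> 0} = {m. \<phi> x m \<noteq> 0} \<inter> S" for x
    using Mlo[of x] by (auto simp: \<psi>_def)
  have fs\<psi>: "finite {m. \<psi> x m \<noteq> 0}" for x using fs by (simp add: spt\<psi>)
  have \<psi>P: "\<psi> x \<in> PS S \<inter> Pd d" for x
  proof -
    have "\<forall>m. \<psi> x m \<ge> 0" using nn Mlo[of x] by (auto simp: \<psi>_def)
    moreover have "(\<Sum>m\<in>{m. \<psi> x m \<noteq> 0}. \<psi> x m) = 1"
    proof -
      have "(\<Sum>m\<in>{m. \<psi> x m \<noteq> 0}. \<psi> x m) = (\<Sum>m\<in>{m. \<phi> x m \<noteq> 0} \<inter> S. \<phi> x m / M x)"
        unfolding spt\<psi> by (rule sum.cong) (auto simp: \<psi>_def)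
      also have "\<dots> = M x / M x" by (simp add: sum_divide_distrib[symmetric] Mint)
      finally show ?thesis using Mlo[of x] by simp
    qed
    moreover have "card {m. \<psi> x m \<noteq> 0} \<le> d + 1"
      using card_mono[OF fs[of x], of "{m. \<phi> x m \<noteq> 0} \<inter> S"] cd[of x] by (simp add: spt\<psi>)
    ultimately show ?thesis using fs\<psi>[of x] by (auto simp: PS_def Pd_def prob_int_def spt\<psi>)
  qed
  have close: "rho (\<psi> x) (\<phi> x) \<le> \<eta>" for x
  proof -
    let ?A = "{m. \<phi> x m \<noteq> 0}"
    have "rho (\<psi> x) (\<phi> x) = (\<Sum>k\<in>?A. \<bar>\<psi> x k - \<phi> x k\<bar>)"
      by (rule rho_sum) (use fs in \<open>auto simp: spt\<psi>\<close>)
    also have "\<dots> = (\<Sum>k\<in>?A \<inter> S. \<bar>\<psi> x k - \<phi> x k\<bar>) + (\<Sum>k\<in>?A - S. \<bar>\<psi> x k - \<phi> x k\<bar>)"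
      by (rule sum.Int_Diff[OF fs])
    finally have e0: "rho (\<psi> x) (\<phi> x) = (\<Sum>k\<in>?A \<inter> S. \<bar>\<psi> x k - \<phi> x k\<bar>) + (\<Sum>k\<in>?A - S. \<bar>\<psi> x k - \<phi> x k\<bar>)" .
    have inv: "1 / M x - 1 \<ge> 0" using Mlo[of x] Mhi[of x] by (simp add: field_simps)
    have "(\<Sum>k\<in>?A \<inter> S. \<bar>\<psi> x k - \<phi> x k\<bar>) = (\<Sum>k\<in>?A \<inter> S. \<phi> x k * (1 / M x - 1))"
    proof (rule sum.cong)
      fix k assume "k \<in> ?A \<inter> S"
      then have "\<psi> x k - \<phi> x k = \<phi> x k * (1 / M x - 1)" by (simp add: \<psi>_def algebra_simps)
      then show "\<bar>\<psi> x k - \<phi> x k\<bar> = \<phi> x k * (1 / M x - 1)" using inv nn[of x k] by simp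
    qed simp
    also have "\<dots> = M x * (1 / M x - 1)" by (simp add: sum_distrib_right[symmetric] Mint)
    also have "\<dots> = 1 - M x" using Mlo[of x] by (simp add: field_simps)
    finally have e1: "(\<Sum>k\<in>?A \<inter> S. \<bar>\<psi> x k - \<phi> x k\<bar>) = 1 - M x" .
    have "(\<Sum>k\<in>?A - S. \<bar>\<psi> x k - \<phi> x k\<bar>) = (\<Sum>k\<in>?A - S. \<phi> x k)"
      by (rule sum.cong) (auto simp: \<psi>_def nn)
    also have "\<dots> = 1 - M x" using Meq[of x] by simp
    finally have e2: "(\<Sum>k\<in>?A - S. \<bar>\<psi> x k - \<phi> x k\<bar>) = 1 - M x" .
    show ?thesis using e0 e1 e2 Md[of x] \<delta>_def by linarith
  qed
  have lip: "rho (\<psi> y) (\<psi> x) \<le> 4 * rho (\<phi> y) (\<phi> x)" for x y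
  proof -
    let ?B = "S \<union> {m. \<phi> y m \<noteq> 0} \<union> {m. \<phi> x m \<noteq> 0}"
    have "rho (\<phi> y) (\<phi> x) = (\<Sum>k\<in>?B. \<bar>\<phi> y k - \<phi> x k\<bar>)"
      by (rule rho_sum) (use fs finS in auto)
    moreover have "(\<Sum>k\<in>S. \<bar>\<phi> y k - \<phi> x k\<bar>) \<le> (\<Sum>k\<in>?B. \<bar>\<phi> y k - \<phi> x k\<bar>)"
      by (rule sum_mono2) (use fs finS in auto)
    ultimately have R: "(\<Sum>k\<in>S. \<bar>\<phi> y k - \<phi> x k\<bar>) \<le> rho (\<phi> y) (\<phi> x)" by simp
    have "\<bar>M x - M y\<bar> = \<bar>\<Sum>k\<in>S. \<phi> y k - \<phi> x k\<bar>"
      unfolding M_def by (simp add: sum_subtractf abs_minus_commute)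
    also have "\<dots> \<le> (\<Sum>k\<in>S. \<bar>\<phi> y k - \<phi> x k\<bar>)" by (rule sum_abs)
    finally have dM: "\<bar>M x - M y\<bar> \<le> (\<Sum>k\<in>S. \<bar>\<phi> y k - \<phi> x k\<bar>)" .
    have "rho (\<psi> y) (\<psi> x) = (\<Sum>k\<in>S. \<bar>\<psi> y k - \<psi> x k\<bar>)"
      by (rule rho_sum) (use finS in \<open>auto simp: spt\<psi>\<close>)
    also have "\<dots> = (\<Sum>k\<in>S. \<bar>\<phi> y k / M y - \<phi> x k / M x\<bar>)"
      by (rule sum.cong) (auto simp: \<psi>_def)
    also have "\<dots> \<le> (\<Sum>k\<in>S. \<bar>\<phi> y k - \<phi> x k\<bar> * (1 / M y) + \<phi> x k * (\<bar>M x - M y\<bar> / (M y * M x)))"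
      by (rule sum_mono, rule ptwise) (use Mlo[of x] Mlo[of y] nn in auto)
    also have "\<dots> = (\<Sum>k\<in>S. \<bar>\<phi> y k - \<phi> x k\<bar>) * (1 / M y) + M x * (\<bar>M x - M y\<bar> / (M y * M x))"
      by (simp only: sum.distrib sum_distrib_right[symmetric] M_def)
    also have "M x * (\<bar>M x - M y\<bar> / (M y * M x)) = \<bar>M x - M y\<bar> * (1 / M y)"
      using Mlo[of x] Mlo[of y] by (simp add: field_simps)
    also have "(\<Sum>k\<in>S. \<bar>\<phi> y k - \<phi> x k\<bar>) * (1 / M y) + \<bar>M x - M y\<bar> * (1 / M y)
        = ((\<Sum>k\<in>S. \<bar>\<phi> y k - \<phi> x k\<bar>) + \<bar>M x - M y\<bar>) * (1 / M y)" by (simp add: algebra_simps)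
    also have "\<dots> \<le> (2 * rho (\<phi> y) (\<phi> x)) * 2"
    proof (rule mult_mono)
      show "1 / M y \<le> 2" using Mlo[of y] by (simp add: field_simps)
    qed (use R dM rho_nonneg Mlo[of y] in auto)
    finally show ?thesis by simp
  qed
  show ?thesis
  proof (intro exI conjI)
    show "finite S" by (rule finS)
    show "\<forall>x. \<psi> x \<in> Pd d" using \<psi>P by auto
    show "\<forall>x. \<psi> x \<in> PS S \<inter> Pd d" using \<psi>P by auto
    show "rho_continuous \<psi>"
      unfolding rho_continuous_def
    proof (intro allI impI)
      fix x and e :: real assume "e > 0"
      then obtain d' where "d' > 0" "\<forall>y. dist y x < d' \<longrightarrow> rho (\<phi> y) (\<phi> x) < e/4"
        using assms(7) unfolding rho_continuous_def by (meson divide_pos_pos zero_less_numeral)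
      then show "\<exists>\<delta>>0. \<forall>y. dist y x < \<delta> \<longrightarrow> rho (\<psi> y) (\<psi> x) < e"
        using lip by (metis (no_types, opaque_lifting) dual_order.strict_trans2 mult.commute pos_less_divide_eq zero_less_numeral)
    qed
    show "equivariant_approx T E \<epsilon> \<psi>"
      unfolding equivariant_approx_def
    proof (intro ballI allI)
      fix n x y assume nE: "n \<in> E" and y: "y \<in> orbit_set T n x"
      have "rho (\<psi> y) (alpha n (\<psi> x)) \<le> rho (\<psi> y) (\<phi> y) + rho (\<phi> y) (alpha n (\<phi> x)) + rho (\<psi> x) (\<phi> x)"
        by (rule h_est) (use fs fs\<psi> in auto)
      moreover have "rho (\<phi> y) (alpha n (\<phi> x)) \<le> c" using cb nE y by blast
      moreover have "\<eta> + c + \<eta> < \<epsilon>" using cle by (simp add: \<eta>_def field_simps)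
      ultimately show "rho (\<psi> y) (alpha n (\<psi> x)) < \<epsilon>"
        using close[of x] close[of y] by linarith
    qed
  qed
qed

end
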